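(* Let $\mu,w,w'\in\mathbb{R}^d$ and $\sigma_1,\dots,\sigma_d>0$, and let $P=N(\mu,\mathrm{diag}(\sigma_1^2,\dots,\sigma_d^2))$. Consider affine flows of the diagonal form $w_i\mapsto a_iw_i+b_i$ ($i=1,\dots,d$) with $a_i\neq 0$, and the problem of minimizing $D_{\mathrm{KL}}[P'\,\|\,P]$ over $(a_1,\dots,a_d,b_1,\dots,b_d)$, where $P'$ is the push-forward of $P$ under this flow, subject to the constraint $w_i'=a_iw_i+b_i$ for all $i$. Put $u_i=(w_i-\mu_i)/\sigma_i$ and $v_i=(w_i'-\mu_i)/\sigma_i$. Then the optimal transformation is given by $$a_i^\ast=\frac{u_iv_i+\delta_i\sqrt{4+u_i^2(4+v_i^2)}}{2(1+u_i^2)}$$ for some $\delta_i\in\{-1,+1\}$, and the posterior hyperparameters (the mean $\mu_i'$ and standard deviation $\sigma_i'$ of the $i$-th component of $P'$) are $$\sigma_i'=a_i^\ast\sigma_i,\qquad \mu_i'=a_i^\ast(\mu_i-w_i)+w_i'.$$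
   Context: $\mathrm{diag}(\cdot)$ denotes a diagonal matrix; subscripts $i$ denote vector components. The push-forward of $N(\mu,\mathrm{diag}(\sigma_i^2))$ under $w_i\mapsto a_iw_i+b_i$ is the Gaussian with independent components of mean $a_i\mu_i+b_i$ and variance $a_i^2\sigma_i^2$. $D_{\mathrm{KL}}$ is the Kullback–Leibler divergence. *)

theory Defs
  imports "HOL-Probability.Probability"
begin

text \<open>The diagonal Gaussian N(mu, diag(sigma_i^2)) on R^d, modelled as the product
  measure over the index set {..<d} (points are extensional functions nat => real).\<close>
definition diag_gaussian :: "nat \<Rightarrow> (nat \<Rightarrow> real) \<Rightarrow> (nat \<Rightarrow> real) \<Rightarrow> (nat \<Rightarrow> real) measure" where
  "diag_gaussian d \<mu> \<sigma> = (\<Pi>\<^sub>M i\<in>{..<d}. density lborel (normal_density (\<mu> i) (\<sigma> i)))"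

definition diag_flow :: "nat \<Rightarrow> (nat \<Rightarrow> real) \<Rightarrow> (nat \<Rightarrow> real) \<Rightarrow> (nat \<Rightarrow> real) \<Rightarrow> (nat \<Rightarrow> real)" where
  "diag_flow d a b = (\<lambda>x. \<lambda>i\<in>{..<d}. a i * x i + b i)"

definition pushforward :: "nat \<Rightarrow> (nat \<Rightarrow> real) \<Rightarrow> (nat \<Rightarrow> real) \<Rightarrow> (nat \<Rightarrow> real) \<Rightarrow> (nat \<Rightarrow> real)
    \<Rightarrow> (nat \<Rightarrow> real) measure" where
  "pushforward d \<mu> \<sigma> a b = distr (diag_gaussian d \<mu> \<sigma>) (diag_gaussian d \<mu> \<sigma>) (diag_flow d a b)"

text \<open>D_KL[P' || P] with natural logarithm; note KL_divergence b M N = D(N || M).\<close>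
definition KL_obj :: "nat \<Rightarrow> (nat \<Rightarrow> real) \<Rightarrow> (nat \<Rightarrow> real) \<Rightarrow> (nat \<Rightarrow> real) \<Rightarrow> (nat \<Rightarrow> real) \<Rightarrow> real" where
  "KL_obj d \<mu> \<sigma> a b = KL_divergence (exp 1) (diag_gaussian d \<mu> \<sigma>) (pushforward d \<mu> \<sigma> a b)"

definition feasible :: "nat \<Rightarrow> (nat \<Rightarrow> real) \<Rightarrow> (nat \<Rightarrow> real) \<Rightarrow> ((nat \<Rightarrow> real) \<times> (nat \<Rightarrow> real)) set" where
  "feasible d w w' = {(a, b). \<forall>i<d. a i \<noteq> 0 \<and> w' i = a i * w i + b i}"

end

theory Submission
  imports Defs
begin


lemma ln_strict: fixes x :: real assumes "0 < x" "x \<noteq> 1" shows "ln x < x - 1"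
proof -
  have sx: "sqrt x > 0" using assms by simp
  have "sqrt x \<noteq> 1" using assms by auto
  then have "(sqrt x - 1)^2 > 0" by simp
  then have "2 * (sqrt x - 1) < x - 1" using assms by (simp add: power2_eq_square algebra_simps)
  moreover have "ln (sqrt x) \<le> sqrt x - 1" using sx by (rule ln_le_minus_one)
  moreover have "ln x = 2 * ln (sqrt x)" using assms by (simp add: ln_sqrt)
  ultimately show ?thesis by (smt (verit))
qed

definition Gf :: "real \<Rightarrow> real \<Rightarrow> real \<Rightarrow> real" where
  "Gf u v a = - ln \<bar>a\<bar> + ((v - a * u)^2 + a^2) / 2 - 1/2"

lemma G_strict:
  fixes u v r t :: real
  assumes root: "(1 + u^2) * r^2 - u * v * r - 1 = 0" and t: "t * r > 0" and ne: "t \<noteq> r"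
  shows "Gf u v r < Gf u v t"
proof -
  let ?c = "1 + u^2" and ?k = "u * v"
  have r0: "r \<noteq> 0" using t by auto
  have q: "t / r > 0" using t r0 by (metis divide_pos_pos mult_pos_pos zero_less_mult_iff zero_less_divide_iff)
  have q1: "t / r \<noteq> 1" using ne r0 by simp
  have ln: "ln (t / r) < t / r - 1" by (rule ln_strict[OF q q1])
  have lnabs: "ln \<bar>t\<bar> - ln \<bar>r\<bar> = ln (t / r)"
  proof -
    have "\<bar>t\<bar> > 0" "\<bar>r\<bar> > 0" using r0 t by auto
    then have "ln \<bar>t\<bar> - ln \<bar>r\<bar> = ln (\<bar>t\<bar> / \<bar>r\<bar>)" by (simp add: ln_div)
    also have "\<bar>t\<bar> / \<bar>r\<bar> = t / r" using q by (metis abs_divide abs_of_pos)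
    finally show ?thesis .
  qed
  have quad: "?c * (t^2 - r^2) / 2 - ?k * (t - r) \<ge> (?c * r - ?k) * (t - r)"
  proof -
    have "?c * (t^2 - r^2) / 2 - ?k * (t - r) - (?c * r - ?k) * (t - r) = ?c * (t - r)^2 / 2"
      by (simp add: power2_eq_square field_simps)
    moreover have "?c * (t - r)^2 / 2 \<ge> 0" by simp
    ultimately show ?thesis by linarith
  qed
  have "(?c * r - ?k) * (t - r) = t / r - 1"
  proof -
    have e: "?c * r - ?k = 1 / r" using root r0 by (simp add: field_simps power2_eq_square)
    show ?thesis unfolding e using r0 by (simp add: field_simps)
  qed
  have "Gf u v t - Gf u v r = - (ln \<bar>t\<bar> - ln \<bar>r\<bar>) + (?c * (t^2 - r^2) / 2 - ?k * (t - r))"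
    unfolding Gf_def by (simp add: power2_eq_square field_simps)
  then show ?thesis using ln lnabs quad \<open>(?c * r - ?k) * (t - r) = t / r - 1\<close> by linarith
qed

lemma G_le:
  assumes root: "(1 + u^2) * r^2 - u * v * r - 1 = 0" and t: "t * r > 0"
  shows "Gf u v r \<le> Gf u v t"
  using G_strict[OF root t] by (cases "t = r") auto

lemma G_neg: "Gf u v (- t) - Gf u v t = 2 * t * (u * v)"
  unfolding Gf_def by (simp add: power2_eq_square field_simps)

lemma root_gen:
  fixes c k Sq :: real
  assumes "c \<noteq> 0" "Sq^2 = k^2 + 4 * c"
  shows "c * ((k + Sq) / (2 * c))^2 - k * ((k + Sq) / (2 * c)) - 1 = 0"
proof -
  have "c * ((k + Sq) / (2 * c))^2 - k * ((k + Sq) / (2 * c)) - 1 = (Sq^2 - k^2 - 4 * c) / (4 * c)"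
    using assms(1) by (simp add: field_simps power2_eq_square)
  then show ?thesis using assms(2) by simp
qed

lemma roots:
  fixes u v :: real
  defines "Sq \<equiv> sqrt (4 + u^2 * (4 + v^2))"
  shows "(1 + u^2) * ((u * v + Sq) / (2 * (1 + u^2)))^2 - u * v * ((u * v + Sq) / (2 * (1 + u^2))) - 1 = 0"
    and "(1 + u^2) * ((u * v - Sq) / (2 * (1 + u^2)))^2 - u * v * ((u * v - Sq) / (2 * (1 + u^2))) - 1 = 0"
    and "(u * v + Sq) / (2 * (1 + u^2)) > 0"
    and "(u * v - Sq) / (2 * (1 + u^2)) < 0"
proof -
  have c: "1 + u^2 > 0" by (simp add: add_pos_nonneg)
  have S2: "Sq^2 = (u * v)^2 + 4 * (1 + u^2)"
  proof -
    have "4 + u^2 * (4 + v^2) \<ge> 0" by (simp add: add_nonneg_nonneg)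
    then have "Sq^2 = 4 + u^2 * (4 + v^2)" unfolding Sq_def by simp
    then show ?thesis by (simp add: power2_eq_square algebra_simps)
  qed
  have S0: "Sq \<ge> 0" unfolding Sq_def by simp
  have "\<bar>u * v\<bar> < Sq"
  proof -
    have "\<bar>u * v\<bar>^2 < Sq^2" using S2 c by simp
    then show ?thesis using S0 by (metis power2_abs power_less_imp_less_base)
  qed
  then have k1: "u * v + Sq > 0" and k2: "u * v - Sq < 0" by linarith+
  show "(u * v + Sq) / (2 * (1 + u^2)) > 0" using k1 c by simp
  show "(u * v - Sq) / (2 * (1 + u^2)) < 0" using k2 c by (simp add: divide_neg_pos)
  show "(1 + u^2) * ((u * v + Sq) / (2 * (1 + u^2)))^2 - u * v * ((u * v + Sq) / (2 * (1 + u^2))) - 1 = 0"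
    using c S2 by (intro root_gen) auto
  have "(1 + u^2) * ((u * v + (-Sq)) / (2 * (1 + u^2)))^2 - u * v * ((u * v + (-Sq)) / (2 * (1 + u^2))) - 1 = 0"
    using c S2 by (intro root_gen) auto
  then show "(1 + u^2) * ((u * v - Sq) / (2 * (1 + u^2)))^2 - u * v * ((u * v - Sq) / (2 * (1 + u^2))) - 1 = 0"
    by simp
qed

lemma G_min_exists: "\<exists>a::real. a \<noteq> 0 \<and> (\<forall>t. t \<noteq> 0 \<longrightarrow> Gf u v a \<le> Gf u v t)"
proof -
  define Sq where "Sq = sqrt (4 + u^2 * (4 + v^2))"
  define ap where "ap = (u * v + Sq) / (2 * (1 + u^2))"
  define am where "am = (u * v - Sq) / (2 * (1 + u^2))"
  note R = roots[of u v, folded Sq_def, folded ap_def am_def]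
  show ?thesis
  proof (cases "u * v \<ge> 0")
    case True
    show ?thesis
    proof (intro exI[of _ ap] conjI allI impI)
      show "ap \<noteq> 0" using R(3) by simp
      fix t :: real assume "t \<noteq> 0"
      show "Gf u v ap \<le> Gf u v t"
      proof (cases "t > 0")
        case True then show ?thesis using R(1,3) by (intro G_le) auto
      next
        case False
        then have "t < 0" using \<open>t \<noteq> 0\<close> by simp
        have "Gf u v ap \<le> Gf u v (- t)" using R(1,3) \<open>t < 0\<close> by (intro G_le) (auto simp: mult_neg_pos)
        moreover have "Gf u v (- t) - Gf u v t \<le> 0" unfolding G_neg
          using \<open>t < 0\<close> True by (simp add: mult_nonpos_nonneg)
        ultimately show ?thesis by linarith
      qed
    qed
  next
    case False
    show ?thesis
    proof (intro exI[of _ am] conjI allI impI)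
      show "am \<noteq> 0" using R(4) by simp
      fix t :: real assume "t \<noteq> 0"
      show "Gf u v am \<le> Gf u v t"
      proof (cases "t < 0")
        case True then show ?thesis using R(2,4) by (intro G_le) (auto simp: mult_neg_neg)
      next
        case f2: False
        then have "t > 0" using \<open>t \<noteq> 0\<close> by simp
        have "Gf u v am \<le> Gf u v (- t)" using R(2,4) \<open>t > 0\<close> by (intro G_le) (auto simp: mult_pos_neg)
        moreover have "Gf u v (- t) - Gf u v t \<le> 0" unfolding G_neg
          using \<open>t > 0\<close> False by (simp add: mult_nonneg_nonpos)
        ultimately show ?thesis by linarith
      qed
    qed
  qed
qed

lemma G_min_char:
  assumes a: "a \<noteq> 0" and min: "\<forall>t. t \<noteq> 0 \<longrightarrow> Gf u v a \<le> Gf u v t"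
  shows "\<exists>\<delta>\<in>{-1, 1::real}. a = (u * v + \<delta> * sqrt (4 + u^2 * (4 + v^2))) / (2 * (1 + u^2))"
proof -
  define Sq where "Sq = sqrt (4 + u^2 * (4 + v^2))"
  define ap where "ap = (u * v + Sq) / (2 * (1 + u^2))"
  define am where "am = (u * v - Sq) / (2 * (1 + u^2))"
  note R = roots[of u v, folded Sq_def, folded ap_def am_def]
  have "a = ap \<or> a = am"
  proof (rule ccontr)
    assume ne: "\<not> (a = ap \<or> a = am)"
    show False
    proof (cases "a > 0")
      case True
      have "Gf u v ap < Gf u v a" using R(1,3) True ne by (intro G_strict) auto
      moreover have "Gf u v a \<le> Gf u v ap" using min R(3) by simp
      ultimately show False by simp
    next
      case False
      then have "a < 0" using a by simp
      have "Gf u v am < Gf u v a" using R(2,4) \<open>a < 0\<close> ne by (intro G_strict) (auto simp: mult_neg_neg)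
      moreover have "Gf u v a \<le> Gf u v am" using min R(4) by simp
      ultimately show False by simp
    qed
  qed
  then show ?thesis
  proof
    assume "a = ap" then show ?thesis by (intro bexI[of _ 1]) (auto simp: ap_def Sq_def)
  next
    assume "a = am" then show ?thesis by (intro bexI[of _ "-1"]) (auto simp: am_def Sq_def)
  qed
qed



lemma aff1:
  assumes "0 < \<sigma>" "\<alpha> \<noteq> 0"
  shows "distr (density lborel (normal_density \<mu> \<sigma>)) lborel (\<lambda>x. \<beta> + \<alpha> * x)
       = density lborel (normal_density (\<beta> + \<alpha> * \<mu>) (\<bar>\<alpha>\<bar> * \<sigma>))"
proof -
  interpret prob_space "density lborel (normal_density \<mu> \<sigma>)"
    by (rule prob_space_normal_density) fact
  have "distributed (density lborel (normal_density \<mu> \<sigma>)) lborel (\<lambda>x. x) (normal_density \<mu> \<sigma>)"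
    unfolding distributed_def
    by (auto intro!: measure_eqI simp: emeasure_distr emeasure_density)
  from normal_density_affine[OF this assms]
  show ?thesis unfolding distributed_def by simp
qed

lemma sf_nd: "sigma_finite_measure (density lborel (normal_density m s))"
  by (subst sigma_finite_measure.sigma_finite_iff_density_finite) (auto intro: sigma_finite_lborel)

lemma flow_meas: "diag_flow d a b \<in> measurable (PiM {..<d} (\<lambda>i. density lborel (f i))) (PiM {..<d} (\<lambda>i. density lborel (g i)))"
  unfolding diag_flow_def by measurable

lemma pre_aff: "A \<in> sets borel \<Longrightarrow> (\<lambda>x::real. b + a * x) -` A \<in> sets borel"
  using measurable_sets[of "\<lambda>x::real. b + a * x" borel borel A] by simp

lemma push_prod:
  fixes d :: nat and \<sigma> a b \<mu> :: "nat \<Rightarrow> real"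
  assumes \<sigma>: "\<forall>i<d. \<sigma> i > 0" and a: "\<forall>i<d. a i \<noteq> 0"
  shows "distr (PiM {..<d} (\<lambda>i. density lborel (normal_density (\<mu> i) (\<sigma> i))))
               (PiM {..<d} (\<lambda>i. density lborel (normal_density (\<mu> i) (\<sigma> i)))) (diag_flow d a b)
       = PiM {..<d} (\<lambda>i. density lborel (normal_density (b i + a i * \<mu> i) (\<bar>a i\<bar> * \<sigma> i)))"
    (is "distr ?P ?P ?F = PiM ?I ?N'")
proof -
  let ?N = "\<lambda>i. density lborel (normal_density (\<mu> i) (\<sigma> i))"
  interpret S': product_sigma_finite ?N' by (simp add: product_sigma_finite_def sf_nd)
  interpret S: product_sigma_finite ?N by (simp add: product_sigma_finite_def sf_nd)
  show ?thesis
  proof (rule S'.PiM_eqI)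
    show "sets (distr ?P ?P ?F) = sets (PiM ?I ?N')"
      by (auto intro!: sets_PiM_cong)
  next
    fix A assume A: "\<And>i. i \<in> ?I \<Longrightarrow> A i \<in> sets (?N' i)"
    have Asets: "PiE ?I A \<in> sets ?P"
      using A by (auto intro!: sets_PiM_I_finite)
    have pre: "?F -` PiE ?I A \<inter> space ?P = PiE ?I (\<lambda>i. (\<lambda>x. b i + a i * x) -` A i)"
      by (auto simp: diag_flow_def space_PiM PiE_iff add.commute)
    have "emeasure (distr ?P ?P ?F) (PiE ?I A) = emeasure ?P (PiE ?I (\<lambda>i. (\<lambda>x. b i + a i * x) -` A i))"
      using Asets by (simp add: emeasure_distr flow_meas pre)
    also have "\<dots> = (\<Prod>i\<in>?I. emeasure (?N i) ((\<lambda>x. b i + a i * x) -` A i))"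
      using A by (intro S.emeasure_PiM) (auto intro: pre_aff)
    also have "\<dots> = (\<Prod>i\<in>?I. emeasure (?N' i) (A i))"
    proof (rule prod.cong)
      fix i assume i: "i \<in> ?I"
      have "emeasure (?N' i) (A i) = emeasure (distr (?N i) lborel (\<lambda>x. b i + a i * x)) (A i)"
        using aff1[of "\<sigma> i" "a i" "\<mu> i" "b i"] \<sigma> a i by simp
      also have "\<dots> = emeasure (?N i) ((\<lambda>x. b i + a i * x) -` A i)"
        using A[OF i] by (subst emeasure_distr) auto
      finally show "emeasure (?N i) ((\<lambda>x. b i + a i * x) -` A i) = emeasure (?N' i) (A i)" by simp
    qed simp
    finally show "emeasure (distr ?P ?P ?F) (PiE ?I A) = (\<Prod>i\<in>?I. emeasure (?N' i) (A i))" .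
  qed simp
qed

lemma prod_ind:
  assumes "finite I"
  shows "(\<Prod>i\<in>I. indicator (A i) (x i) :: ennreal) = (if \<forall>i\<in>I. x i \<in> A i then 1 else 0)"
proof (cases "\<forall>i\<in>I. x i \<in> A i")
  case True then show ?thesis by (simp add: indicator_def)
next
  case False
  then obtain j where "j \<in> I" "x j \<notin> A j" by auto
  then show ?thesis using assms False by (intro trans[OF prod_zero]) (auto simp: indicator_def)
qed

lemma dens_prod:
  fixes d :: nat and \<sigma> s \<mu> m :: "nat \<Rightarrow> real"
  assumes \<sigma>: "\<forall>i<d. \<sigma> i > 0" and s: "\<forall>i<d. s i > 0"
  shows "density (PiM {..<d} (\<lambda>i. density lborel (normal_density (\<mu> i) (\<sigma> i))))
           (\<lambda>x. \<Prod>i<d. normal_density (m i) (s i) (x i) / normal_density (\<mu> i) (\<sigma> i) (x i))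
       = PiM {..<d} (\<lambda>i. density lborel (normal_density (m i) (s i)))"
    (is "density ?P _ = PiM ?I ?N'")
proof -
  let ?f = "\<lambda>x. \<Prod>i<d. normal_density (m i) (s i) (x i) / normal_density (\<mu> i) (\<sigma> i) (x i)"
  let ?N = "\<lambda>i. density lborel (normal_density (\<mu> i) (\<sigma> i))"
  let ?r = "\<lambda>i y. normal_density (m i) (s i) y / normal_density (\<mu> i) (\<sigma> i) y"
  interpret S': product_sigma_finite ?N' by (simp add: product_sigma_finite_def sf_nd)
  interpret S: product_sigma_finite ?N by (simp add: product_sigma_finite_def sf_nd)
  have fm: "(\<lambda>x. ennreal (?f x)) \<in> borel_measurable ?P" by measurable
  show ?thesis
  proof (rule S'.PiM_eqI)
    show "sets (density ?P ?f) = sets (PiM ?I ?N')"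
      by (auto intro!: sets_PiM_cong)
  next
    fix A assume A: "\<And>i. i \<in> ?I \<Longrightarrow> A i \<in> sets (?N' i)"
    have Asets: "PiE ?I A \<in> sets ?P"
      using A by (auto intro!: sets_PiM_I_finite simp: finite_lessThan)
    have "emeasure (density ?P ?f) (PiE ?I A) = (\<integral>\<^sup>+ x. ennreal (?f x) * indicator (PiE ?I A) x \<partial>?P)"
      using Asets fm by (simp add: emeasure_density)
    also have "\<dots> = (\<integral>\<^sup>+ x. (\<Prod>i\<in>?I. ennreal (?r i (x i)) * indicator (A i) (x i)) \<partial>?P)"
    proof (rule nn_integral_cong)
      fix x assume x: "x \<in> space ?P"
      have "(\<Prod>i\<in>?I. ennreal (?r i (x i)) * indicator (A i) (x i))
          = (\<Prod>i\<in>?I. ennreal (?r i (x i))) * (\<Prod>i\<in>?I. indicator (A i) (x i))"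
        by (rule prod.distrib)
      also have "(\<Prod>i\<in>?I. ennreal (?r i (x i))) = ennreal (?f x)"
        by (rule prod_ennreal) (auto intro!: divide_nonneg_nonneg)
      also have "(\<Prod>i\<in>?I. indicator (A i) (x i) :: ennreal) = indicator (PiE ?I A) x"
        using x by (simp add: prod_ind space_PiM PiE_iff indicator_def)
      finally show "ennreal (?f x) * indicator (PiE ?I A) x = (\<Prod>i\<in>?I. ennreal (?r i (x i)) * indicator (A i) (x i))"
        by simp
    qed
    also have "\<dots> = (\<Prod>i\<in>?I. \<integral>\<^sup>+ y. ennreal (?r i y) * indicator (A i) y \<partial>?N i)"
      using A by (intro S.product_nn_integral_prod) auto
    also have "\<dots> = (\<Prod>i\<in>?I. emeasure (?N' i) (A i))"
    proof (rule prod.cong)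
      fix i assume i: "i \<in> ?I"
      have "(\<integral>\<^sup>+ y. ennreal (?r i y) * indicator (A i) y \<partial>?N i)
          = (\<integral>\<^sup>+ y. ennreal (normal_density (\<mu> i) (\<sigma> i) y) * (ennreal (?r i y) * indicator (A i) y) \<partial>lborel)"
        using A[OF i] by (subst nn_integral_density) auto
      also have "\<dots> = (\<integral>\<^sup>+ y. ennreal (normal_density (m i) (s i) y) * indicator (A i) y \<partial>lborel)"
      proof (rule nn_integral_cong)
        fix y
        have "normal_density (\<mu> i) (\<sigma> i) y > 0" using \<sigma> i by (simp add: normal_density_pos)
        then have "normal_density (\<mu> i) (\<sigma> i) y * ?r i y = normal_density (m i) (s i) y" by simp
        then show "ennreal (normal_density (\<mu> i) (\<sigma> i) y) * (ennreal (?r i y) * indicator (A i) y)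
            = ennreal (normal_density (m i) (s i) y) * indicator (A i) y"
          by (simp add: mult.assoc[symmetric] ennreal_mult'[symmetric])
      qed
      also have "\<dots> = emeasure (?N' i) (A i)"
        using A[OF i] by (simp add: emeasure_density)
      finally show "(\<integral>\<^sup>+ y. ennreal (?r i y) * indicator (A i) y \<partial>?N i) = emeasure (?N' i) (A i)" .
    qed simp
    finally show "emeasure (density ?P ?f) (PiE ?I A) = (\<Prod>i\<in>?I. emeasure (?N' i) (A i))" .
  qed simp
qed

lemma ln_nd:
  assumes "s > 0"
  shows "ln (normal_density m s y) = - ln (sqrt (2 * pi)) - ln s - (y - m)^2 / (2 * s^2)"
proof -
  have "sqrt (2 * pi * s\<^sup>2) = sqrt (2 * pi) * s" using assms by (simp add: real_sqrt_mult)
  then show ?thesis using assms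
    by (simp add: normal_density_def ln_mult ln_div)
qed

lemma KL1:
  fixes m s \<mu> \<sigma> :: real
  assumes s: "s > 0" and \<sigma>: "\<sigma> > 0"
  defines "h \<equiv> (\<lambda>y. ln (normal_density m s y / normal_density \<mu> \<sigma> y))"
  shows "integrable (density lborel (normal_density m s)) h"
    and "integral\<^sup>L (density lborel (normal_density m s)) h
         = ln \<sigma> - ln s + ((m - \<mu>)^2 + s^2) / (2 * \<sigma>^2) - 1/2"
proof -
  define c0 where "c0 = ln \<sigma> - ln s + (m - \<mu>)^2 / (2 * \<sigma>^2)"
  define c1 where "c1 = (m - \<mu>) / \<sigma>^2"
  define c2 where "c2 = 1 / (2 * \<sigma>^2) - 1 / (2 * s^2)"
  have heq: "h y = c0 + c1 * (y - m) ^ (2 * 0 + 1) + c2 * (y - m) ^ (2 * 1)" for y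
  proof -
    have "h y = ln (normal_density m s y) - ln (normal_density \<mu> \<sigma> y)"
      unfolding h_def using normal_density_pos[OF s, of m y] normal_density_pos[OF \<sigma>, of \<mu> y]
      by (simp add: ln_div)
    also have "\<dots> = c0 + c1 * (y - m) ^ (2 * 0 + 1) + c2 * (y - m) ^ (2 * 1)"
      using s \<sigma> unfolding ln_nd[OF s] ln_nd[OF \<sigma>] c0_def c1_def c2_def
      by (simp add: field_simps power2_eq_square)
    finally show ?thesis .
  qed
  have B: "has_bochner_integral lborel (\<lambda>y. normal_density m s y * h y) (c0 * 1 + c1 * 0 + c2 * s^2)"
  proof -
    have i0: "has_bochner_integral lborel (\<lambda>y. normal_density m s y * (y - m) ^ (2 * 0)) 1"
      using normal_moment_even[where k=0 and \<mu>=m and \<sigma>=s] s by simp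
    have i1: "has_bochner_integral lborel (\<lambda>y. normal_density m s y * (y - m) ^ (2 * 0 + 1)) 0"
      using normal_moment_odd[where k=0 and \<mu>=m and \<sigma>=s] s by simp
    have i2: "has_bochner_integral lborel (\<lambda>y. normal_density m s y * (y - m) ^ (2 * 1)) (s^2)"
      using normal_moment_even[where k=1 and \<mu>=m and \<sigma>=s] s by (simp add: power2_eq_square)
    have "has_bochner_integral lborel (\<lambda>y. c0 * (normal_density m s y * (y - m) ^ (2 * 0))
        + c1 * (normal_density m s y * (y - m) ^ (2 * 0 + 1)) + c2 * (normal_density m s y * (y - m) ^ (2 * 1)))
        (c0 * 1 + c1 * 0 + c2 * s^2)"
      by (intro has_bochner_integral_add has_bochner_integral_mult_right i0 i1 i2)
    then show ?thesis
      by (rule has_bochner_integral_cong[THEN iffD1, rotated -1]) (auto simp: heq algebra_simps)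
  qed
  have hm: "h \<in> borel_measurable lborel" unfolding h_def by measurable
  show "integrable (density lborel (normal_density m s)) h"
    using B hm by (subst integrable_density) (auto intro: integrable.intros)
  have "integral\<^sup>L (density lborel (normal_density m s)) h = c0 * 1 + c1 * 0 + c2 * s^2"
    using B hm by (subst integral_density) (auto dest: has_bochner_integral_integral_eq)
  also have "\<dots> = ln \<sigma> - ln s + ((m - \<mu>)^2 + s^2) / (2 * \<sigma>^2) - 1/2"
    using s \<sigma> unfolding c0_def c2_def by (simp add: field_simps power2_eq_square)
  finally show "integral\<^sup>L (density lborel (normal_density m s)) h
         = ln \<sigma> - ln s + ((m - \<mu>)^2 + s^2) / (2 * \<sigma>^2) - 1/2" .
qed

lemma KL_formula:
  fixes d :: nat and \<sigma> a b \<mu> :: "nat \<Rightarrow> real"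
  assumes \<sigma>: "\<forall>i<d. \<sigma> i > 0" and a: "\<forall>i<d. a i \<noteq> 0"
  shows "KL_obj d \<mu> \<sigma> a b = (\<Sum>i<d. ln (\<sigma> i) - ln (\<bar>a i\<bar> * \<sigma> i)
            + ((b i + a i * \<mu> i - \<mu> i)^2 + (\<bar>a i\<bar> * \<sigma> i)^2) / (2 * (\<sigma> i)^2) - 1/2)"
proof -
  define m where "m i = b i + a i * \<mu> i" for i
  define s where "s i = \<bar>a i\<bar> * \<sigma> i" for i
  let ?I = "{..<d}"
  let ?N = "\<lambda>i. density lborel (normal_density (\<mu> i) (\<sigma> i))"
  let ?N' = "\<lambda>i. density lborel (normal_density (m i) (s i))"
  let ?P = "PiM ?I ?N" and ?Q = "PiM ?I ?N'"
  define r where "r i y = normal_density (m i) (s i) y / normal_density (\<mu> i) (\<sigma> i) y" for i y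
  define f where "f x = (\<Prod>i<d. r i (x i))" for x
  have s: "\<forall>i<d. s i > 0" using \<sigma> a by (simp add: s_def)
  have rpos: "r i y > 0" if "i < d" for i y
    using that s \<sigma> by (simp add: r_def normal_density_pos)
  have Nprob: "prob_space (?N' i)" if "i < d" for i
    using s that by (simp add: prob_space_normal_density)
  have PP: "pushforward d \<mu> \<sigma> a b = ?Q"
    unfolding pushforward_def diag_gaussian_def m_def s_def using push_prod[OF \<sigma> a] by simp
  have DQ: "density ?P f = ?Q"
    unfolding f_def r_def using dens_prod[OF \<sigma> s, of \<mu> m] by simp
  interpret P: prob_space ?P
    by (rule prob_space_PiM) (simp add: prob_space_normal_density \<sigma>)
  have fm[measurable]: "f \<in> borel_measurable ?P" unfolding f_def r_def by measurable
  have fnn: "AE x in ?P. 0 \<le> f x"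
    by (auto simp: f_def intro!: prod_nonneg less_imp_le[OF rpos])
  have "KL_obj d \<mu> \<sigma> a b = KL_divergence (exp 1) ?P (density ?P f)"
    unfolding KL_obj_def PP DQ diag_gaussian_def ..
  also have "\<dots> = (\<integral>x. f x * log (exp 1) (f x) \<partial>?P)"
    by (rule P.KL_density) (auto simp: fnn)
  also have "\<dots> = (\<integral>x. f x *\<^sub>R ln (f x) \<partial>?P)"
    by (simp add: log_def)
  also have "\<dots> = (\<integral>x. ln (f x) \<partial>density ?P f)"
    by (rule integral_density[symmetric]) (auto simp: fnn)
  also have "\<dots> = (\<integral>x. ln (f x) \<partial>?Q)" unfolding DQ ..
  also have "\<dots> = (\<integral>x. (\<Sum>i\<in>?I. ln (r i (x i))) \<partial>?Q)"
  proof (rule Bochner_Integration.integral_cong[OF refl])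
    fix x
    have "\<And>i. i \<in> ?I \<Longrightarrow> r i (x i) \<noteq> 0"
    proof -
      fix i assume "i \<in> ?I"
      then have "r i (x i) > 0" using rpos[of i "x i"] by simp
      then show "r i (x i) \<noteq> 0" by simp
    qed
    then show "ln (f x) = (\<Sum>i\<in>?I. ln (r i (x i)))"
      unfolding f_def by (intro ln_prod) auto
  qed
  also have "\<dots> = (\<Sum>i\<in>?I. (\<integral>x. ln (r i (x i)) \<partial>?Q))"
  proof (rule Bochner_Integration.integral_sum)
    fix i assume i: "i \<in> ?I"
    have "integrable (?N' i) (\<lambda>y. ln (r i y))"
      using KL1(1)[of "s i" "\<sigma> i" "m i" "\<mu> i"] s \<sigma> i by (simp add: r_def)
    then have "integrable (distr ?Q (?N' i) (\<lambda>x. x i)) (\<lambda>y. ln (r i y))"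
      using i by (subst distr_PiM_component) (auto intro: Nprob)
    then show "integrable ?Q (\<lambda>x. ln (r i (x i)))"
      using i by (subst (asm) integrable_distr_eq) (auto simp: r_def intro: measurable_component_singleton)
  qed
  also have "\<dots> = (\<Sum>i<d. ln (\<sigma> i) - ln (s i) + ((m i - \<mu> i)^2 + (s i)^2) / (2 * (\<sigma> i)^2) - 1/2)"
  proof (rule sum.cong[OF refl])
    fix i assume i: "i \<in> ?I"
    have "(\<integral>x. ln (r i (x i)) \<partial>?Q) = integral\<^sup>L (distr ?Q (?N' i) (\<lambda>x. x i)) (\<lambda>y. ln (r i y))"
      using i by (subst integral_distr) (auto simp: r_def intro: measurable_component_singleton)
    also have "\<dots> = integral\<^sup>L (?N' i) (\<lambda>y. ln (r i y))"
      using i by (subst distr_PiM_component) (auto intro: Nprob)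
    also have "\<dots> = ln (\<sigma> i) - ln (s i) + ((m i - \<mu> i)^2 + (s i)^2) / (2 * (\<sigma> i)^2) - 1/2"
      using KL1(2)[of "s i" "\<sigma> i" "m i" "\<mu> i"] s \<sigma> i by (simp add: r_def)
    finally show "(\<integral>x. ln (r i (x i)) \<partial>?Q) = ln (\<sigma> i) - ln (s i) + ((m i - \<mu> i)^2 + (s i)^2) / (2 * (\<sigma> i)^2) - 1/2" .
  qed
  finally show ?thesis by (simp add: m_def s_def)
qed


lemma term_eq:
  fixes \<sigma> a w w' \<mu> :: real
  assumes "\<sigma> > 0" "a \<noteq> 0"
  shows "ln \<sigma> - ln (\<bar>a\<bar> * \<sigma>) + (((w' - a * w) + a * \<mu> - \<mu>)^2 + (\<bar>a\<bar> * \<sigma>)^2) / (2 * \<sigma>^2) - 1/2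
       = Gf ((w - \<mu>) / \<sigma>) ((w' - \<mu>) / \<sigma>) a"
proof -
  have "ln (\<bar>a\<bar> * \<sigma>) = ln \<bar>a\<bar> + ln \<sigma>" using assms by (simp add: ln_mult)
  moreover have "(((w' - a * w) + a * \<mu> - \<mu>)^2 + (\<bar>a\<bar> * \<sigma>)^2) / (2 * \<sigma>^2)
      = (((w' - \<mu>) / \<sigma> - a * ((w - \<mu>) / \<sigma>))^2 + a^2) / 2"
    using assms by (simp add: field_simps power2_eq_square)
  ultimately show ?thesis unfolding Gf_def by simp
qed

lemma KLG:
  fixes d :: nat and \<mu> \<sigma> w w' a b :: "nat \<Rightarrow> real"
  assumes \<sigma>: "\<forall>i<d. \<sigma> i > 0" and ab: "(a, b) \<in> feasible d w w'"
  shows "KL_obj d \<mu> \<sigma> a b = (\<Sum>i<d. Gf ((w i - \<mu> i) / \<sigma> i) ((w' i - \<mu> i) / \<sigma> i) (a i))"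
proof -
  have a: "\<forall>i<d. a i \<noteq> 0" and b: "\<forall>i<d. b i = w' i - a i * w i"
    using ab by (auto simp: feasible_def)
  show ?thesis unfolding KL_formula[OF \<sigma> a]
  proof (rule sum.cong[OF refl])
    fix i assume "i \<in> {..<d}"
    then show "ln (\<sigma> i) - ln (\<bar>a i\<bar> * \<sigma> i) + ((b i + a i * \<mu> i - \<mu> i)^2 + (\<bar>a i\<bar> * \<sigma> i)^2) / (2 * (\<sigma> i)^2) - 1/2
      = Gf ((w i - \<mu> i) / \<sigma> i) ((w' i - \<mu> i) / \<sigma> i) (a i)"
      using term_eq[of "\<sigma> i" "a i" "w' i" "w i" "\<mu> i"] \<sigma> a b by simp
  qed
qed

lemma marg:
  fixes d :: nat and \<mu> \<sigma> a b :: "nat \<Rightarrow> real"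
  assumes \<sigma>: "\<forall>i<d. \<sigma> i > 0" and a: "\<forall>i<d. a i \<noteq> 0" and i: "i < d"
  shows "distr (pushforward d \<mu> \<sigma> a b) lborel (\<lambda>x. x i)
       = density lborel (normal_density (b i + a i * \<mu> i) (\<bar>a i\<bar> * \<sigma> i))"
proof -
  let ?N' = "\<lambda>i. density lborel (normal_density (b i + a i * \<mu> i) (\<bar>a i\<bar> * \<sigma> i))"
  have "pushforward d \<mu> \<sigma> a b = PiM {..<d} ?N'"
    unfolding pushforward_def diag_gaussian_def using push_prod[OF \<sigma> a] by simp
  moreover have "distr (PiM {..<d} ?N') lborel (\<lambda>x. x i) = distr (PiM {..<d} ?N') (?N' i) (\<lambda>x. x i)"
    by (rule distr_cong) auto
  moreover have "distr (PiM {..<d} ?N') (?N' i) (\<lambda>x. x i) = ?N' i"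
    using \<sigma> a i by (intro distr_PiM_component) (auto intro: prob_space_normal_density)
  ultimately show ?thesis by simp
qed

theorem mainTheorem2:
  fixes d :: nat and \<mu> \<sigma> w w' :: "nat \<Rightarrow> real"
  assumes \<sigma>_pos: "\<forall>i<d. \<sigma> i > 0"
  defines "u \<equiv> (\<lambda>i. (w i - \<mu> i) / \<sigma> i)"
      and "v \<equiv> (\<lambda>i. (w' i - \<mu> i) / \<sigma> i)"
  shows "(\<exists>(a, b)\<in>feasible d w w'. \<forall>(a', b')\<in>feasible d w w'.
            KL_obj d \<mu> \<sigma> a b \<le> KL_obj d \<mu> \<sigma> a' b')
       \<and> (\<forall>(a, b)\<in>feasible d w w'.
            (\<forall>(a', b')\<in>feasible d w w'. KL_obj d \<mu> \<sigma> a b \<le> KL_obj d \<mu> \<sigma> a' b') \<longrightarrow>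
            (\<forall>i<d.
               (\<exists>\<delta>\<in>{-1, 1::real}.
                  a i = (u i * v i + \<delta> * sqrt (4 + (u i)\<^sup>2 * (4 + (v i)\<^sup>2))) / (2 * (1 + (u i)\<^sup>2)))
             \<and> distr (pushforward d \<mu> \<sigma> a b) lborel (\<lambda>x. x i)
                 = density lborel (normal_density (a i * (\<mu> i - w i) + w' i) (a i * \<sigma> i))))"
proof (intro conjI)
  have K: "KL_obj d \<mu> \<sigma> a b = (\<Sum>i<d. Gf (u i) (v i) (a i))" if "(a, b) \<in> feasible d w w'" for a b
    using KLG[OF \<sigma>_pos that] by (simp add: u_def v_def)
  show "\<exists>(a, b)\<in>feasible d w w'. \<forall>(a', b')\<in>feasible d w w'. KL_obj d \<mu> \<sigma> a b \<le> KL_obj d \<mu> \<sigma> a' b'"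
  proof -
    define A where "A i = (SOME a. a \<noteq> 0 \<and> (\<forall>t. t \<noteq> 0 \<longrightarrow> Gf (u i) (v i) a \<le> Gf (u i) (v i) t))" for i
    have A: "A i \<noteq> 0 \<and> (\<forall>t. t \<noteq> 0 \<longrightarrow> Gf (u i) (v i) (A i) \<le> Gf (u i) (v i) t)" for i
      unfolding A_def by (rule someI_ex) (rule G_min_exists)
    define B where "B i = w' i - A i * w i" for i
    have fe: "(A, B) \<in> feasible d w w'" using A by (auto simp: feasible_def B_def)
    have "\<forall>(a', b')\<in>feasible d w w'. KL_obj d \<mu> \<sigma> A B \<le> KL_obj d \<mu> \<sigma> a' b'"
    proof (clarify)
      fix a' b' assume f': "(a', b') \<in> feasible d w w'"
      then have "\<forall>i<d. a' i \<noteq> 0" by (auto simp: feasible_def)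
      then show "KL_obj d \<mu> \<sigma> A B \<le> KL_obj d \<mu> \<sigma> a' b'"
        unfolding K[OF fe] K[OF f'] using A by (intro sum_mono) auto
    qed
    then show ?thesis using fe by blast
  qed
  show "\<forall>(a, b)\<in>feasible d w w'.
            (\<forall>(a', b')\<in>feasible d w w'. KL_obj d \<mu> \<sigma> a b \<le> KL_obj d \<mu> \<sigma> a' b') \<longrightarrow>
            (\<forall>i<d.
               (\<exists>\<delta>\<in>{-1, 1::real}.
                  a i = (u i * v i + \<delta> * sqrt (4 + (u i)\<^sup>2 * (4 + (v i)\<^sup>2))) / (2 * (1 + (u i)\<^sup>2)))
             \<and> distr (pushforward d \<mu> \<sigma> a b) lborel (\<lambda>x. x i)
                 = density lborel (normal_density (a i * (\<mu> i - w i) + w' i) (a i * \<sigma> i)))"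
  proof (clarify)
    fix a b i
    assume fe: "(a, b) \<in> feasible d w w'"
      and min: "\<forall>(a', b')\<in>feasible d w w'. KL_obj d \<mu> \<sigma> a b \<le> KL_obj d \<mu> \<sigma> a' b'"
      and i: "i < d"
    have a: "\<forall>i<d. a i \<noteq> 0" and b: "\<forall>i<d. b i = w' i - a i * w i"
      using fe by (auto simp: feasible_def)
    have gmin: "\<forall>t. t \<noteq> 0 \<longrightarrow> Gf (u i) (v i) (a i) \<le> Gf (u i) (v i) t"
    proof (intro allI impI)
      fix t :: real assume t: "t \<noteq> 0"
      let ?a' = "a(i := t)" and ?b' = "b(i := w' i - t * w i)"
      have fe': "(?a', ?b') \<in> feasible d w w'" using fe t by (auto simp: feasible_def)
      have le: "(\<Sum>j<d. Gf (u j) (v j) (a j)) \<le> (\<Sum>j<d. Gf (u j) (v j) (?a' j))"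
      proof -
        have "KL_obj d \<mu> \<sigma> a b \<le> KL_obj d \<mu> \<sigma> ?a' ?b'" using min fe' by blast
        then show ?thesis unfolding K[OF fe] K[OF fe'] .
      qed
      have s1: "(\<Sum>j<d. Gf (u j) (v j) (a j)) = Gf (u i) (v i) (a i) + (\<Sum>j\<in>{..<d} - {i}. Gf (u j) (v j) (a j))"
        using i by (subst sum.remove[of _ i]) auto
      have s2: "(\<Sum>j<d. Gf (u j) (v j) (?a' j)) = Gf (u i) (v i) t + (\<Sum>j\<in>{..<d} - {i}. Gf (u j) (v j) (a j))"
        using i by (subst sum.remove[of _ i]) (auto intro!: sum.cong)
      show "Gf (u i) (v i) (a i) \<le> Gf (u i) (v i) t" using le s1 s2 by linarith
    qed
    have "\<exists>\<delta>\<in>{-1, 1::real}. a i = (u i * v i + \<delta> * sqrt (4 + (u i)\<^sup>2 * (4 + (v i)\<^sup>2))) / (2 * (1 + (u i)\<^sup>2))"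
      using G_min_char[OF _ gmin] a i by simp
    moreover have "distr (pushforward d \<mu> \<sigma> a b) lborel (\<lambda>x. x i)
                 = density lborel (normal_density (a i * (\<mu> i - w i) + w' i) (a i * \<sigma> i))"
    proof -
      have "normal_density (b i + a i * \<mu> i) (\<bar>a i\<bar> * \<sigma> i) = normal_density (a i * (\<mu> i - w i) + w' i) (a i * \<sigma> i)"
      proof -
        have bi: "b i = w' i - a i * w i" using b i by simp
        have "b i + a i * \<mu> i = a i * (\<mu> i - w i) + w' i" by (simp add: bi algebra_simps)
        moreover have "normal_density m (\<bar>a i\<bar> * \<sigma> i) = normal_density m (a i * \<sigma> i)" for m
          by (simp add: normal_density_def power_mult_distrib fun_eq_iff)
        ultimately show ?thesis by simp
      qed
      then show ?thesis using marg[OF \<sigma>_pos a i, of \<mu> b] by simp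
    qed
    ultimately show "(\<exists>\<delta>\<in>{-1, 1::real}. a i = (u i * v i + \<delta> * sqrt (4 + (u i)\<^sup>2 * (4 + (v i)\<^sup>2))) / (2 * (1 + (u i)\<^sup>2)))
             \<and> distr (pushforward d \<mu> \<sigma> a b) lborel (\<lambda>x. x i)
                 = density lborel (normal_density (a i * (\<mu> i - w i) + w' i) (a i * \<sigma> i))" ..
  qed
qed

end
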